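(* Let $q\in(1,+\infty)$, $T>0$, $x<0$ and $v>0$ be such that $\frac{2q-1}{q-1}\frac{|x|}{v}<T$. For $\theta\in(0,T]$ let $$I(\theta,0)=\inf\Big\{\frac1q\int_0^\theta|\eta'(s)|^q ds:\ \eta\in W^{1,q}(0,\theta;\mathbb R),\ \eta(0)=v,\ \eta(\theta)=0,\ \eta\ge 0 \text{ on }[0,\theta],\ x+\int_0^\theta\eta(s)ds\le0\Big\}.$$ Then $\theta\mapsto I(\theta,0)$ is non-increasing on $(0,T]$, and its minimal value on $(0,T)$ is $\frac{q^{q-1}}{(2q-1)^q}\frac{v^{2q-1}}{|x|^{q-1}}$. *)

theory Defs
  imports "HOL-Analysis.Analysis"
begin

text \<open>One-dimensional Sobolev space W^{1,q}(0,theta): eta (continuous representative)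
  together with its weak derivative g in L^q(0,theta), i.e. eta is absolutely continuous
  with eta(t) = eta(0) + int_0^t g.\<close>
definition W1q_pair :: "real \<Rightarrow> real \<Rightarrow> (real \<Rightarrow> real) \<Rightarrow> (real \<Rightarrow> real) \<Rightarrow> bool" where
  "W1q_pair q \<theta> \<eta> g \<longleftrightarrow>
     g absolutely_integrable_on {0..\<theta>} \<and>
     (\<lambda>s. \<bar>g s\<bar> powr q) integrable_on {0..\<theta>} \<and>
     (\<forall>t\<in>{0..\<theta>}. \<eta> t = \<eta> 0 + integral {0..t} g)"

definition I_cost :: "real \<Rightarrow> real \<Rightarrow> real \<Rightarrow> real \<Rightarrow> real" where
  "I_cost q x v \<theta> = Inf {(1/q) * integral {0..\<theta>} (\<lambda>s. \<bar>g s\<bar> powr q) | \<eta> g.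
      W1q_pair q \<theta> \<eta> g \<and> \<eta> 0 = v \<and> \<eta> \<theta> = 0 \<and> (\<forall>s\<in>{0..\<theta>}. \<eta> s \<ge> 0) \<and>
      x + integral {0..\<theta>} \<eta> \<le> 0}"

end

theory Submission
  imports Defs
begin


lemma const_by_eps:
  fixes F G :: "real \<Rightarrow> real" and \<theta> :: real
  assumes th: "0 \<le> \<theta>"
    and key: "\<And>\<epsilon>. \<epsilon> > 0 \<Longrightarrow> \<exists>\<delta>>0. \<forall>t t'. 0 \<le> t \<longrightarrow> t \<le> t' \<longrightarrow> t' \<le> \<theta> \<longrightarrow> t' - t < \<delta> \<longrightarrow>
              \<bar>F t' - F t\<bar> \<le> \<epsilon> * (G t' - G t)"
  shows "F \<theta> = F 0"
proof -
  have "\<bar>F \<theta> - F 0\<bar> \<le> \<epsilon> * (G \<theta> - G 0)" if e: "\<epsilon> > 0" for \<epsilon>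
  proof -
    obtain \<delta> where d: "\<delta> > 0" and dk: "\<forall>t t'. 0 \<le> t \<longrightarrow> t \<le> t' \<longrightarrow> t' \<le> \<theta> \<longrightarrow> t' - t < \<delta> \<longrightarrow>
              \<bar>F t' - F t\<bar> \<le> \<epsilon> * (G t' - G t)" using key[OF e] by blast
    have ind: "\<forall>t. 0 \<le> t \<longrightarrow> t \<le> \<theta> \<longrightarrow> t \<le> real n * (\<delta>/2) \<longrightarrow> \<bar>F t - F 0\<bar> \<le> \<epsilon> * (G t - G 0)" for n
    proof (induction n)
      case 0
      then show ?case by auto
    next
      case (Suc n)
      show ?case
      proof (intro allI impI)
        fix t assume t: "0 \<le> t" "t \<le> \<theta>" "t \<le> real (Suc n) * (\<delta>/2)"
        show "\<bar>F t - F 0\<bar> \<le> \<epsilon> * (G t - G 0)"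
        proof (cases "t \<le> real n * (\<delta>/2)")
          case True then show ?thesis using Suc t by blast
        next
          case False
          define t0 where "t0 = max 0 (t - \<delta>/2)"
          have t0: "0 \<le> t0" "t0 \<le> t" "t0 \<le> real n * (\<delta>/2)" "t - t0 < \<delta>"
            using False t d by (auto simp: t0_def algebra_simps max_def)
          have "\<bar>F t0 - F 0\<bar> \<le> \<epsilon> * (G t0 - G 0)" using Suc t0 t by auto
          moreover have "\<bar>F t - F t0\<bar> \<le> \<epsilon> * (G t - G t0)" using dk t0 t by blast
          ultimately show ?thesis by (simp add: algebra_simps)
        qed
      qed
    qed
    obtain n where "\<theta> / (\<delta>/2) \<le> real n" using real_arch_simple by blast
    then have "\<theta> \<le> real n * (\<delta>/2)" using d by (simp add: field_simps)
    then show ?thesis using ind th by auto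
  qed
  then have "\<bar>F \<theta> - F 0\<bar> \<le> 0"
  proof -
    assume h: "\<And>\<epsilon>. \<epsilon> > 0 \<Longrightarrow> \<bar>F \<theta> - F 0\<bar> \<le> \<epsilon> * (G \<theta> - G 0)"
    show ?thesis
    proof (rule field_le_epsilon)
      fix e :: real assume e: "0 < e"
      show "\<bar>F \<theta> - F 0\<bar> \<le> 0 + e"
      proof (cases "G \<theta> - G 0 \<le> 0")
        case True then show ?thesis using h[of 1] e by simp
      next
        case False
        have "\<bar>F \<theta> - F 0\<bar> \<le> (e / (G \<theta> - G 0)) * (G \<theta> - G 0)" using h[of "e / (G \<theta> - G 0)"] False e by simp
        then show ?thesis using False by simp
      qed
    qed
  qed
  then show ?thesis by simp
qed

lemma mvt_ivt:
  fixes \<eta> \<phi> \<psi> :: "real \<Rightarrow> real"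
  assumes tt: "t \<le> t'" and etac: "continuous_on {t..t'} \<eta>"
    and pos: "\<forall>s\<in>{t..t'}. 0 \<le> \<eta> s"
    and phic: "continuous_on {0..} \<phi>"
    and der: "\<And>y. 0 < y \<Longrightarrow> (\<phi> has_real_derivative \<psi> y) (at y)"
  shows "\<exists>s0\<in>{t..t'}. \<phi> (\<eta> t') - \<phi> (\<eta> t) = \<psi> (\<eta> s0) * (\<eta> t' - \<eta> t)"
proof -
  have p1: "0 \<le> \<eta> t" "0 \<le> \<eta> t'" using pos tt by auto
  consider "\<eta> t = \<eta> t'" | "\<eta> t < \<eta> t'" | "\<eta> t' < \<eta> t" by linarith
  then show ?thesis
  proof cases
    case 1 then show ?thesis using tt by (intro bexI[of _ t]) auto
  next
    case 2
    have "continuous_on {\<eta> t..\<eta> t'} \<phi>" by (rule continuous_on_subset[OF phic]) (use p1 in auto)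
    moreover have "\<phi> differentiable (at x)" if "\<eta> t < x" for x
      using der[of x] p1 that real_differentiable_def by fastforce
    ultimately obtain l z where z: "\<eta> t < z" "z < \<eta> t'" "DERIV \<phi> z :> l"
        "\<phi> (\<eta> t') - \<phi> (\<eta> t) = (\<eta> t' - \<eta> t) * l"
      using MVT[OF 2] by blast
    have l: "l = \<psi> z" using DERIV_unique[OF z(3) der[of z]] z p1 by auto
    obtain s0 where "t \<le> s0" "s0 \<le> t'" "\<eta> s0 = z" using IVT'[of \<eta> t z t', OF _ _ tt etac] z by auto
    then show ?thesis using z l by (intro bexI[of _ s0]) auto
  next
    case 3
    have "continuous_on {\<eta> t'..\<eta> t} \<phi>" by (rule continuous_on_subset[OF phic]) (use p1 in auto)
    moreover have "\<phi> differentiable (at x)" if "\<eta> t' < x" for x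
      using der[of x] p1 that real_differentiable_def by fastforce
    ultimately obtain l z where z: "\<eta> t' < z" "z < \<eta> t" "DERIV \<phi> z :> l"
        "\<phi> (\<eta> t) - \<phi> (\<eta> t') = (\<eta> t - \<eta> t') * l"
      using MVT[OF 3] by blast
    have l: "l = \<psi> z" using DERIV_unique[OF z(3) der[of z]] z p1 by auto
    obtain s0 where "t \<le> s0" "s0 \<le> t'" "\<eta> s0 = z" using IVT2'[of \<eta> t' z t, OF _ _ tt etac] z by auto
    then show ?thesis using z l by (intro bexI[of _ s0]) (auto simp: algebra_simps)
  qed
qed

lemma chain_rule:
  fixes \<eta> g \<phi> \<psi> :: "real \<Rightarrow> real" and \<theta> :: real
  assumes th: "0 \<le> \<theta>" and gi: "g absolutely_integrable_on {0..\<theta>}"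
    and eta: "\<forall>t\<in>{0..\<theta>}. \<eta> t = \<eta> 0 + integral {0..t} g"
    and pos: "\<forall>t\<in>{0..\<theta>}. 0 \<le> \<eta> t"
    and phic: "continuous_on {0..} \<phi>" and psic: "continuous_on {0..} \<psi>"
    and der: "\<And>y. 0 < y \<Longrightarrow> (\<phi> has_real_derivative \<psi> y) (at y)"
  shows "(\<lambda>s. \<psi> (\<eta> s) * g s) integrable_on {0..\<theta>}"
    and "\<phi> (\<eta> \<theta>) - \<phi> (\<eta> 0) = integral {0..\<theta>} (\<lambda>s. \<psi> (\<eta> s) * g s)"
proof -
  have gint: "g integrable_on {0..\<theta>}" and agint: "(\<lambda>s. \<bar>g s\<bar>) integrable_on {0..\<theta>}"
    using gi by (auto simp: absolutely_integrable_on_def)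
  have etac: "continuous_on {0..\<theta>} \<eta>"
  proof -
    have "continuous_on {0..\<theta>} (\<lambda>t. \<eta> 0 + integral {0..t} g)"
      by (intro continuous_intros indefinite_integral_continuous_1 gint)
    then show ?thesis using continuous_on_eq eta by (metis (no_types, lifting))
  qed
  have pc: "continuous_on {0..\<theta>} (\<lambda>s. \<psi> (\<eta> s))"
    by (rule continuous_on_compose2[OF psic etac]) (use pos in auto)
  have "(\<lambda>s. \<psi> (\<eta> s) * g s) absolutely_integrable_on {0..\<theta>}"
  proof (rule absolutely_integrable_bounded_measurable_product_real[OF _ _ _ gi])
    show "(\<lambda>s. \<psi> (\<eta> s)) \<in> borel_measurable (lebesgue_on {0..\<theta>})"
      by (rule continuous_imp_measurable_on_sets_lebesgue[OF pc]) auto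
    show "{0..\<theta>} \<in> sets lebesgue" by auto
    show "bounded ((\<lambda>s. \<psi> (\<eta> s)) ` {0..\<theta>})"
      by (rule compact_imp_bounded, rule compact_continuous_image[OF pc]) auto
  qed
  then have pint: "(\<lambda>s. \<psi> (\<eta> s) * g s) integrable_on {0..\<theta>}"
    by (auto simp: absolutely_integrable_on_def)
  then show "(\<lambda>s. \<psi> (\<eta> s) * g s) integrable_on {0..\<theta>}" .
  have uc: "uniformly_continuous_on {0..\<theta>} (\<lambda>s. \<psi> (\<eta> s))"
    by (rule compact_uniformly_continuous[OF pc]) auto
  define F where "F t = \<phi> (\<eta> t) - integral {0..t} (\<lambda>s. \<psi> (\<eta> s) * g s)" for t
  define G where "G t = integral {0..t} (\<lambda>s. \<bar>g s\<bar>)" for t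
  have "F \<theta> = F 0"
  proof (rule const_by_eps[OF th])
    fix \<epsilon> :: real assume e: "\<epsilon> > 0"
    obtain \<delta> where d: "\<delta> > 0" and dd: "\<forall>s\<in>{0..\<theta>}. \<forall>s'\<in>{0..\<theta>}. dist s' s < \<delta> \<longrightarrow>
        dist (\<psi> (\<eta> s')) (\<psi> (\<eta> s)) < \<epsilon>"
      using uc e unfolding uniformly_continuous_on_def by metis
    show "\<exists>\<delta>>0. \<forall>t t'. 0 \<le> t \<longrightarrow> t \<le> t' \<longrightarrow> t' \<le> \<theta> \<longrightarrow> t' - t < \<delta> \<longrightarrow>
              \<bar>F t' - F t\<bar> \<le> \<epsilon> * (G t' - G t)"
    proof (intro exI[of _ \<delta>] conjI allI impI d)
      fix t t' assume t: "0 \<le> t" "t \<le> t'" "t' \<le> \<theta>" "t' - t < \<delta>"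
      have sub1: "{0..t'} \<subseteq> {0..\<theta>}" "{t..t'} \<subseteq> {0..\<theta>}" using t by auto
      have c1: "integral {0..t} h + integral {t..t'} h = integral {0..t'} h"
        if "h integrable_on {0..\<theta>}" for h :: "real \<Rightarrow> real"
        by (rule Henstock_Kurzweil_Integration.integral_combine) (use t integrable_on_subinterval[OF that sub1(1)] in auto)
      have i1: "(\<lambda>s. \<psi> (\<eta> s) * g s) integrable_on {t..t'}" "g integrable_on {t..t'}"
        "(\<lambda>s. \<bar>g s\<bar>) integrable_on {t..t'}"
        using integrable_on_subinterval[OF pint sub1(2)] integrable_on_subinterval[OF gint sub1(2)]
          integrable_on_subinterval[OF agint sub1(2)] by simp_all
      have ed: "\<eta> t' - \<eta> t = integral {t..t'} g"
      proof -
        have "t' \<in> {0..\<theta>}" "t \<in> {0..\<theta>}" using t by auto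
        then have "\<eta> t' = \<eta> 0 + integral {0..t'} g" "\<eta> t = \<eta> 0 + integral {0..t} g"
          using eta by (simp only: Ball_def, blast)+
        then show ?thesis using c1[OF gint] by linarith
      qed
      obtain s0 where s0: "s0 \<in> {t..t'}" "\<phi> (\<eta> t') - \<phi> (\<eta> t) = \<psi> (\<eta> s0) * (\<eta> t' - \<eta> t)"
      proof -
        have "\<forall>s\<in>{t..t'}. 0 \<le> \<eta> s" using pos t by auto
        from mvt_ivt[OF t(2) continuous_on_subset[OF etac sub1(2)] this phic der] show ?thesis
          using that by blast
      qed
      have "F t' - F t = \<psi> (\<eta> s0) * integral {t..t'} g - integral {t..t'} (\<lambda>s. \<psi> (\<eta> s) * g s)"
        unfolding F_def using s0(2) ed c1[OF pint] by (simp add: algebra_simps)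
      also have "\<dots> = integral {t..t'} (\<lambda>s. \<psi> (\<eta> s0) * g s) - integral {t..t'} (\<lambda>s. \<psi> (\<eta> s) * g s)"
        using integral_mult[OF i1(2), of "\<psi> (\<eta> s0)"] by simp
      also have "\<dots> = integral {t..t'} (\<lambda>s. \<psi> (\<eta> s0) * g s - \<psi> (\<eta> s) * g s)"
        by (rule Henstock_Kurzweil_Integration.integral_diff[symmetric])
           (use i1 integrable_on_cmult_left[OF i1(2), of "\<psi> (\<eta> s0)"] in auto)
      also have "\<dots> = integral {t..t'} (\<lambda>s. (\<psi> (\<eta> s0) - \<psi> (\<eta> s)) * g s)"
        by (simp add: left_diff_distrib)
      finally have Fd: "F t' - F t = integral {t..t'} (\<lambda>s. (\<psi> (\<eta> s0) - \<psi> (\<eta> s)) * g s)" .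
      have "\<bar>integral {t..t'} (\<lambda>s. (\<psi> (\<eta> s0) - \<psi> (\<eta> s)) * g s)\<bar> \<le> integral {t..t'} (\<lambda>s. \<epsilon> * \<bar>g s\<bar>)"
      proof -
        have "norm (integral {t..t'} (\<lambda>s. (\<psi> (\<eta> s0) - \<psi> (\<eta> s)) * g s)) \<le> integral {t..t'} (\<lambda>s. \<epsilon> * \<bar>g s\<bar>)"
        proof (rule integral_norm_bound_integral)
          show "(\<lambda>s. (\<psi> (\<eta> s0) - \<psi> (\<eta> s)) * g s) integrable_on {t..t'}"
            unfolding left_diff_distrib
            by (rule Henstock_Kurzweil_Integration.integrable_diff)
               (use i1 integrable_on_cmult_left[OF i1(2), of "\<psi> (\<eta> s0)"] in auto)
          show "(\<lambda>s. \<epsilon> * \<bar>g s\<bar>) integrable_on {t..t'}" using integrable_on_cmult_left[OF i1(3), of \<epsilon>] by simp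
          fix s assume s: "s \<in> {t..t'}"
          have "dist (\<psi> (\<eta> s0)) (\<psi> (\<eta> s)) < \<epsilon>"
            using dd s s0 t sub1 by (auto simp: dist_real_def)
          then have "\<bar>\<psi> (\<eta> s0) - \<psi> (\<eta> s)\<bar> \<le> \<epsilon>" by (simp add: dist_real_def)
          then show "norm ((\<psi> (\<eta> s0) - \<psi> (\<eta> s)) * g s) \<le> \<epsilon> * \<bar>g s\<bar>"
            by (simp add: abs_mult mult_right_mono)
        qed
        then show ?thesis by simp
      qed
      also have "\<dots> = \<epsilon> * (G t' - G t)"
        unfolding G_def using c1[OF agint] integral_mult[OF i1(3), of \<epsilon>] by (simp add: algebra_simps) (metis distrib_left)
      finally show "\<bar>F t' - F t\<bar> \<le> \<epsilon> * (G t' - G t)" using Fd by simp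
    qed
  qed
  then show "\<phi> (\<eta> \<theta>) - \<phi> (\<eta> 0) = integral {0..\<theta>} (\<lambda>s. \<psi> (\<eta> s) * g s)"
    unfolding F_def by simp
qed



lemma alg_bound:
  fixes q a v E V :: real
  assumes q: "q > 1" and a: "a > 0" and v: "v > 0" and E: "E > 0"
    and Vdef: "V = v powr ((2*q-1)/q)"
    and H: "\<And>\<mu>. \<mu> > 0 \<Longrightarrow> V \<le> ((2*q-1)/q) * (\<mu> powr (q/(q-1)) * a / (q/(q-1)) + E / (q * \<mu> powr q))"
  shows "q powr (q - 1) / (2*q - 1) powr q * v powr (2*q - 1) / a powr (q - 1) \<le> E / q"
proof -
  define p where "p = q/(q-1)"
  define \<alpha> where "\<alpha> = (2*q-1)/q"
  define r where "r = E / a"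
  have p1: "p > 1" using q by (simp add: p_def field_simps)
  have pq: "1/p + 1/q = 1" using q by (simp add: p_def field_simps)
  have r: "r > 0" using E a by (simp add: r_def)
  have al: "\<alpha> > 0" using q by (simp add: \<alpha>_def)
  define \<mu> where "\<mu> = r powr (1/(p*q))"
  have mu: "\<mu> > 0" using r by (simp add: \<mu>_def)
  have mup: "\<mu> powr p = r powr (1/q)" using p1 q by (simp add: \<mu>_def powr_powr)
  have muq: "\<mu> powr q = r powr (1/p)" using p1 q by (simp add: \<mu>_def powr_powr)
  have Er: "E = a * r" using a by (simp add: r_def)
  have "E / (q * \<mu> powr q) = a * (r / r powr (1/p)) / q" using muq Er by simp
  also have "r / r powr (1/p) = r powr (1/q)"
  proof -
    have "r / r powr (1/p) = r powr (1 - 1/p)" using r by (simp add: powr_diff)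
    also have "1 - 1/p = 1/q" using pq by linarith
    finally show ?thesis .
  qed
  finally have e2: "E / (q * \<mu> powr q) = a * r powr (1/q) / q" .
  have "V \<le> \<alpha> * (r powr (1/q) * a / p + a * r powr (1/q) / q)"
    using H[OF mu] mup e2 unfolding \<alpha>_def p_def by simp
  also have "\<dots> = \<alpha> * a * r powr (1/q) * (1/p + 1/q)" by (simp add: algebra_simps)
  finally have V1: "V \<le> \<alpha> * a * r powr (1/q)" using pq by simp
  have V0: "0 \<le> V" using Vdef by simp
  have "V powr q \<le> (\<alpha> * a * r powr (1/q)) powr q"
    by (rule powr_mono2) (use q V0 V1 in auto)
  also have "\<dots> = \<alpha> powr q * (a powr q * r)"
    using q r al a by (simp add: powr_mult powr_powr)
  also have "a powr q * r = a powr (q-1) * E"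
    using a by (simp add: r_def powr_diff)
  finally have V2: "V powr q \<le> \<alpha> powr q * (a powr (q-1) * E)" .
  have "V powr q = v powr (2*q-1)" using Vdef q by (simp add: powr_powr)
  then have V3: "v powr (2*q-1) / a powr (q-1) \<le> \<alpha> powr q * E"
    using V2 a by (simp add: divide_le_eq mult.commute mult.left_commute)
  have "q powr (q - 1) / (2*q - 1) powr q * v powr (2*q - 1) / a powr (q - 1)
      = q powr (q - 1) / (2*q - 1) powr q * (v powr (2*q - 1) / a powr (q - 1))" by simp
  also have "\<dots> \<le> q powr (q - 1) / (2*q - 1) powr q * (\<alpha> powr q * E)"
    by (rule mult_left_mono[OF V3]) simp
  also have "\<alpha> powr q = (2*q-1) powr q / q powr q"
    unfolding \<alpha>_def using q by (simp add: powr_divide)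
  also have "q powr (q - 1) / (2*q - 1) powr q * ((2*q-1) powr q / q powr q * E) = (q powr (q-1) / q powr q) * E"
    using q by (simp add: field_simps)
  also have "q powr (q-1) / q powr q = 1 / q"
    using q by (simp add: powr_diff)
  finally show ?thesis by simp
qed



lemma eta_cont:
  assumes gi: "g integrable_on {0..\<theta>}" and eta: "\<forall>t\<in>{0..\<theta>}. \<eta> t = \<eta> 0 + integral {0..t} g"
  shows "continuous_on {0..\<theta>} (\<eta> :: real \<Rightarrow> real)"
proof -
  have "continuous_on {0..\<theta>} (\<lambda>t. \<eta> 0 + integral {0..t} g)"
    by (intro continuous_intros indefinite_integral_continuous_1 gi)
  then show ?thesis using continuous_on_eq eta by (metis (no_types, lifting))
qed

lemma lower_bound:
  fixes q \<theta> a v :: real and \<eta> g :: "real \<Rightarrow> real"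
  assumes q: "q > 1" and th: "0 \<le> \<theta>" and a: "a > 0" and v: "v > 0"
    and W: "W1q_pair q \<theta> \<eta> g" and e0: "\<eta> 0 = v" and eth: "\<eta> \<theta> = 0"
    and pos: "\<forall>s\<in>{0..\<theta>}. 0 \<le> \<eta> s"
    and area: "integral {0..\<theta>} \<eta> \<le> a"
  shows "q powr (q - 1) / (2*q - 1) powr q * v powr (2*q - 1) / a powr (q - 1)
         \<le> (1/q) * integral {0..\<theta>} (\<lambda>s. \<bar>g s\<bar> powr q)"
proof -
  have gi: "g absolutely_integrable_on {0..\<theta>}" and gq: "(\<lambda>s. \<bar>g s\<bar> powr q) integrable_on {0..\<theta>}"
    and eta: "\<forall>t\<in>{0..\<theta>}. \<eta> t = \<eta> 0 + integral {0..t} g"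
    using W unfolding W1q_pair_def by blast+
  have gint: "g integrable_on {0..\<theta>}" using gi by (auto simp: absolutely_integrable_on_def)
  have etai: "\<eta> integrable_on {0..\<theta>}"
    by (rule integrable_continuous_interval[OF eta_cont[OF gint eta]])
  define \<alpha> where "\<alpha> = (2*q-1)/q"
  define p where "p = q/(q-1)"
  have al: "\<alpha> > 1" using q by (simp add: \<alpha>_def field_simps)
  have p1: "p > 1" using q by (simp add: p_def field_simps)
  have pq: "1/p + 1/q = 1" using q by (simp add: p_def field_simps)
  have ap: "(\<alpha> - 1) * p = 1" using q by (simp add: p_def \<alpha>_def field_simps)
  define E where "E = integral {0..\<theta>} (\<lambda>s. \<bar>g s\<bar> powr q)"
  have E0: "0 \<le> E" unfolding E_def by (rule integral_nonneg[OF gq]) simp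
  have phic: "continuous_on {0..} (\<lambda>y::real. y powr \<alpha>)"
    by (rule continuous_on_powr') (use al in \<open>auto intro: continuous_intros\<close>)
  have psic: "continuous_on {0..} (\<lambda>y::real. \<alpha> * y powr (\<alpha> - 1))"
    by (intro continuous_intros continuous_on_powr') (use al in \<open>auto intro: continuous_intros\<close>)
  have der: "\<And>y. 0 < y \<Longrightarrow> ((\<lambda>y. y powr \<alpha>) has_real_derivative \<alpha> * y powr (\<alpha> - 1)) (at y)"
    by (rule has_real_derivative_powr)
  note CR = chain_rule[OF th gi eta pos phic psic der]
  have I1: "(\<lambda>s. - (\<alpha> * \<eta> s powr (\<alpha> - 1) * g s)) integrable_on {0..\<theta>}"
    using integrable_neg[OF CR(1)] by simp
  have vI: "v powr \<alpha> = integral {0..\<theta>} (\<lambda>s. - (\<alpha> * \<eta> s powr (\<alpha> - 1) * g s))"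
    using CR(2) e0 eth al by (simp add: integral_neg)
  have H: "v powr \<alpha> \<le> \<alpha> * (\<mu> powr p * a / p + E' / (q * \<mu> powr q))" if mu: "\<mu> > 0" and EE: "E \<le> E'" for \<mu> E'
  proof -
    define c1 where "c1 = \<alpha> * \<mu> powr p / p"
    define c2 where "c2 = \<alpha> / (q * \<mu> powr q)"
    have c1: "c1 \<ge> 0" and c2: "c2 \<ge> 0" using al p1 q mu by (auto simp: c1_def c2_def)
    have pw: "- (\<alpha> * \<eta> s powr (\<alpha> - 1) * g s) \<le> c1 * \<eta> s + c2 * \<bar>g s\<bar> powr q"
      if s: "s \<in> {0..\<theta>}" for s
    proof -
      have es: "0 \<le> \<eta> s" using pos s by auto
      have st1: "- (\<alpha> * \<eta> s powr (\<alpha> - 1) * g s) \<le> \<alpha> * ((\<mu> * \<eta> s powr (\<alpha> - 1)) * (\<bar>g s\<bar> / \<mu>))"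
      proof -
        have "- (\<alpha> * \<eta> s powr (\<alpha> - 1) * g s) \<le> \<alpha> * \<eta> s powr (\<alpha> - 1) * \<bar>g s\<bar>"
          using mult_left_mono[of "- g s" "\<bar>g s\<bar>" "\<alpha> * \<eta> s powr (\<alpha> - 1)"] al by simp
        also have "\<dots> = \<alpha> * ((\<mu> * \<eta> s powr (\<alpha> - 1)) * (\<bar>g s\<bar> / \<mu>))" using mu by simp
        finally show ?thesis .
      qed
      have st2: "\<alpha> * ((\<mu> * \<eta> s powr (\<alpha> - 1)) * (\<bar>g s\<bar> / \<mu>)) \<le>
           \<alpha> * ((\<mu> * \<eta> s powr (\<alpha> - 1)) powr p / p + (\<bar>g s\<bar> / \<mu>) powr q / q)"
        by (rule mult_left_mono[OF Youngs_inequality]) (use p1 q pq mu al in auto)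
      have st3: "(\<mu> * \<eta> s powr (\<alpha> - 1)) powr p = \<mu> powr p * \<eta> s"
        using ap es by (simp add: powr_mult powr_powr)
      have st4: "(\<bar>g s\<bar> / \<mu>) powr q = \<bar>g s\<bar> powr q / \<mu> powr q"
        by (simp add: powr_divide)
      have st5: "\<alpha> * (\<mu> powr p * \<eta> s / p + \<bar>g s\<bar> powr q / \<mu> powr q / q) = c1 * \<eta> s + c2 * \<bar>g s\<bar> powr q"
        unfolding c1_def c2_def by (simp add: algebra_simps)
      show ?thesis using st1 st2 st5 unfolding st3 st4 by linarith
    qed
    have ci1: "(\<lambda>x. c1 * \<eta> x) integrable_on {0..\<theta>}" using integrable_on_cmult_left[OF etai, of c1] by simp
    have ci2: "(\<lambda>x. c2 * \<bar>g x\<bar> powr q) integrable_on {0..\<theta>}" using integrable_on_cmult_left[OF gq, of c2] by simp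
    have "v powr \<alpha> \<le> integral {0..\<theta>} (\<lambda>s. c1 * \<eta> s + c2 * \<bar>g s\<bar> powr q)"
      unfolding vI
      by (rule Henstock_Kurzweil_Integration.integral_le[OF I1 Henstock_Kurzweil_Integration.integrable_add[OF ci1 ci2] pw])
    also have "\<dots> = c1 * integral {0..\<theta>} \<eta> + c2 * E"
      unfolding E_def Henstock_Kurzweil_Integration.integral_add[OF ci1 ci2]
      using integral_mult[OF etai, of c1] integral_mult[OF gq, of c2] by simp
    also have "\<dots> \<le> c1 * a + c2 * E'"
      by (intro add_mono mult_left_mono area EE c1 c2)
    finally show ?thesis by (simp add: c1_def c2_def field_simps)
  qed
  have "q powr (q - 1) / (2*q - 1) powr q * v powr (2*q - 1) / a powr (q - 1) \<le> E / q + e"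
    if e: "e > 0" for e
  proof -
    have "q powr (q - 1) / (2*q - 1) powr q * v powr (2*q - 1) / a powr (q - 1) \<le> (E + q*e) / q"
    proof (rule alg_bound[OF q a v _ refl])
      show "0 < E + q * e" using E0 e q by (simp add: add_nonneg_pos)
    next
      fix \<mu> :: real assume mu: "\<mu> > 0"
      have "E \<le> E + q * e" using e q by simp
      from H[OF mu this] show "v powr ((2 * q - 1) / q) \<le> (2 * q - 1) / q * (\<mu> powr (q / (q - 1)) * a / (q / (q - 1)) + (E + q * e) / (q * \<mu> powr q))"
        unfolding \<alpha>_def p_def .
    qed
    also have "\<dots> = E/q + e" using q by (simp add: field_simps)
    finally show ?thesis .
  qed
  then have "q powr (q - 1) / (2*q - 1) powr q * v powr (2*q - 1) / a powr (q - 1) \<le> E / q"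
    by (rule field_le_epsilon) simp
  then show ?thesis unfolding E_def by simp
qed



lemma pow_deriv:
  fixes \<tau> p c :: real
  assumes tau: "\<tau> > 0" and x: "x < \<tau>"
  shows "((\<lambda>s. c * (1 - s/\<tau>) powr p) has_vector_derivative (- c * p / \<tau> * (1 - x/\<tau>) powr (p - 1))) (at x)"
proof -
  have pos: "0 < 1 - x/\<tau>" using tau x by (simp add: field_simps)
  have "((\<lambda>s. c * (1 - s/\<tau>) powr p) has_real_derivative c * (p * (1 - x/\<tau>) powr (p - 1) * (0 - 1/\<tau>))) (at x)"
  proof -
    have d1: "((\<lambda>z. z powr p) has_real_derivative p * (1 - x/\<tau>) powr (p-1)) (at (1 - x/\<tau>))"
      by (rule has_real_derivative_powr[OF pos])
    have d2: "((\<lambda>s. 1 - s/\<tau>) has_real_derivative (0 - 1/\<tau>)) (at x)"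
      using tau by (auto intro!: derivative_eq_intros)
    show ?thesis by (rule DERIV_cmult, rule DERIV_chain2[OF d1 d2])
  qed
  then show ?thesis
    using tau by (simp add: has_real_derivative_iff_has_vector_derivative algebra_simps)
qed

lemma pow_cont:
  fixes \<tau> p c :: real
  assumes tau: "\<tau> > 0" and p: "p > 0" and t: "t \<le> \<tau>"
  shows "continuous_on {0..t} (\<lambda>s. c * (1 - s/\<tau>) powr p)"
proof -
  have "continuous_on {0..t} (\<lambda>s. (1 - s/\<tau>) powr p)"
    by (rule continuous_on_powr') (use tau p t in \<open>auto intro!: continuous_intros simp: field_simps\<close>)
  then show ?thesis by (rule continuous_on_mult[OF continuous_on_const])
qed

lemma pow_integral:
  fixes \<tau> p :: real
  assumes tau: "\<tau> > 0" and p: "p > 0"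
  shows "((\<lambda>s. (1 - s/\<tau>) powr p) has_integral \<tau>/(p+1)) {0..\<tau>}"
proof -
  have "((\<lambda>s. - (- (\<tau>/(p+1)) * (p+1) / \<tau> * (1 - s/\<tau>) powr (p + 1 - 1))) has_integral
        ((- (\<tau>/(p+1))) * (1 - \<tau>/\<tau>) powr (p+1) - (- (\<tau>/(p+1))) * (1 - 0/\<tau>) powr (p+1))) {0..\<tau>}"
  proof (rule fundamental_theorem_of_calculus_interior)
    show "0 \<le> \<tau>" using tau by simp
    show "continuous_on {0..\<tau>} (\<lambda>s. - (\<tau> / (p + 1)) * (1 - s / \<tau>) powr (p + 1))"
      by (rule pow_cont) (use tau p in auto)
    fix x assume "x \<in> {0<..<\<tau>}"
    then show "((\<lambda>s. - (\<tau> / (p + 1)) * (1 - s / \<tau>) powr (p + 1)) has_vector_derivative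
        - (- (\<tau>/(p+1)) * (p+1) / \<tau> * (1 - x/\<tau>) powr (p + 1 - 1))) (at x)"
      using pow_deriv[OF tau, of x "- (\<tau> / (p + 1))" "p+1"] by simp
  qed
  then show ?thesis using tau p by simp
qed

lemma construct:
  fixes q v \<tau> :: real
  assumes q: "q > 1" and v: "v > 0" and tau: "\<tau> > 0"
  shows "W1q_pair q \<tau> (\<lambda>s. v * (1 - s/\<tau>) powr (q/(q-1))) (\<lambda>s. - v * (q/(q-1)) / \<tau> * (1 - s/\<tau>) powr (q/(q-1) - 1))"
    and "(\<lambda>s. v * (1 - s/\<tau>) powr (q/(q-1))) 0 = v"
    and "(\<lambda>s. v * (1 - s/\<tau>) powr (q/(q-1))) \<tau> = 0"
    and "\<forall>s\<in>{0..\<tau>}. 0 \<le> (\<lambda>s. v * (1 - s/\<tau>) powr (q/(q-1))) s"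
    and "integral {0..\<tau>} (\<lambda>s. v * (1 - s/\<tau>) powr (q/(q-1))) = v * (\<tau> / (q/(q-1) + 1))"
    and "integral {0..\<tau>} (\<lambda>s. \<bar>- v * (q/(q-1)) / \<tau> * (1 - s/\<tau>) powr (q/(q-1) - 1)\<bar> powr q)
         = (v * (q/(q-1)) / \<tau>) powr q * (\<tau> / (q/(q-1) + 1))"
proof -
  define p where "p = q/(q-1)"
  have p1: "p > 1" using q by (simp add: p_def field_simps)
  have pq: "(p - 1) * q = p" using q by (simp add: p_def field_simps)
  define \<eta> where "\<eta> = (\<lambda>s. v * (1 - s/\<tau>) powr p)"
  define g where "g = (\<lambda>s. - v * p / \<tau> * (1 - s/\<tau>) powr (p - 1))"
  have gc: "continuous_on {0..\<tau>} g" unfolding g_def by (rule pow_cont) (use tau p1 in auto)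
  have gi: "g absolutely_integrable_on {0..\<tau>}" by (rule absolutely_integrable_continuous_real[OF gc])
  have gq_eq: "\<bar>g s\<bar> powr q = (v * p / \<tau>) powr q * (1 - s/\<tau>) powr p" if s: "s \<in> {0..\<tau>}" for s
  proof -
    have nn: "0 \<le> 1 - s/\<tau>" using s tau by (simp add: field_simps)
    have "\<bar>g s\<bar> = v * p / \<tau> * (1 - s/\<tau>) powr (p - 1)" unfolding g_def using v p1 tau by (simp add: abs_mult)
    have "\<bar>g s\<bar> powr q = (v * p / \<tau>) powr q * ((1 - s/\<tau>) powr (p - 1)) powr q"
      unfolding \<open>\<bar>g s\<bar> = _\<close> by (rule powr_mult)
    also have "((1 - s/\<tau>) powr (p - 1)) powr q = (1 - s/\<tau>) powr p" by (simp add: powr_powr pq)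
    finally show ?thesis .
  qed
  have PI: "((\<lambda>s. (1 - s/\<tau>) powr p) has_integral \<tau>/(p+1)) {0..\<tau>}"
    by (rule pow_integral) (use tau p1 in auto)
  have gqI: "((\<lambda>s. \<bar>g s\<bar> powr q) has_integral (v * p / \<tau>) powr q * (\<tau>/(p+1))) {0..\<tau>}"
    by (rule has_integral_eq[OF _ has_integral_mult_right[OF PI]]) (use gq_eq in auto)
  have etaI: "(\<eta> has_integral v * (\<tau>/(p+1))) {0..\<tau>}"
    unfolding \<eta>_def by (rule has_integral_mult_right[OF PI])
  have ftc: "\<eta> t = \<eta> 0 + integral {0..t} g" if t: "t \<in> {0..\<tau>}" for t
  proof -
    have "(g has_integral (\<eta> t - \<eta> 0)) {0..t}"
    proof (rule fundamental_theorem_of_calculus_interior)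
      show "0 \<le> t" using t by simp
      show "continuous_on {0..t} \<eta>" unfolding \<eta>_def by (rule pow_cont) (use tau p1 t in auto)
      fix x assume "x \<in> {0<..<t}"
      then have "x < \<tau>" using t by auto
      then show "(\<eta> has_vector_derivative g x) (at x)"
        unfolding \<eta>_def g_def using pow_deriv[OF tau, of x v p] by simp
    qed
    then show ?thesis by (simp add: integral_unique)
  qed
  have W: "W1q_pair q \<tau> \<eta> g"
    unfolding W1q_pair_def using gi gqI ftc by blast
  have e0: "\<eta> 0 = v" unfolding \<eta>_def by simp
  have et: "\<eta> \<tau> = 0" unfolding \<eta>_def using tau by simp
  have ep: "\<forall>s\<in>{0..\<tau>}. 0 \<le> \<eta> s" unfolding \<eta>_def using v by simp
  show "W1q_pair q \<tau> (\<lambda>s. v * (1 - s/\<tau>) powr (q/(q-1))) (\<lambda>s. - v * (q/(q-1)) / \<tau> * (1 - s/\<tau>) powr (q/(q-1) - 1))"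
    using W unfolding \<eta>_def g_def p_def .
  show "(\<lambda>s. v * (1 - s/\<tau>) powr (q/(q-1))) 0 = v" using e0 unfolding \<eta>_def p_def .
  show "(\<lambda>s. v * (1 - s/\<tau>) powr (q/(q-1))) \<tau> = 0" using et unfolding \<eta>_def p_def .
  show "\<forall>s\<in>{0..\<tau>}. 0 \<le> (\<lambda>s. v * (1 - s/\<tau>) powr (q/(q-1))) s" using ep unfolding \<eta>_def p_def .
  show "integral {0..\<tau>} (\<lambda>s. v * (1 - s/\<tau>) powr (q/(q-1))) = v * (\<tau> / (q/(q-1) + 1))"
    using integral_unique[OF etaI] unfolding \<eta>_def p_def .
  show "integral {0..\<tau>} (\<lambda>s. \<bar>- v * (q/(q-1)) / \<tau> * (1 - s/\<tau>) powr (q/(q-1) - 1)\<bar> powr q)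
         = (v * (q/(q-1)) / \<tau>) powr q * (\<tau> / (q/(q-1) + 1))"
    using integral_unique[OF gqI] unfolding g_def p_def .
qed



lemma restrict_integral:
  fixes h :: "real \<Rightarrow> real"
  shows "integral {0..t} (\<lambda>s. if s \<in> {0..\<theta>1} then h s else 0) = integral {0..min \<theta>1 t} h"
    and "h integrable_on {0..\<theta>1} \<Longrightarrow> (\<lambda>s. if s \<in> {0..\<theta>1} then h s else 0) integrable_on {0..t}"
proof -
  have eq: "{0..\<theta>1} \<inter> {0..t} = {0..min \<theta>1 t}" by auto
  show "integral {0..t} (\<lambda>s. if s \<in> {0..\<theta>1} then h s else 0) = integral {0..min \<theta>1 t} h"
    by (simp only: integral_restrict_Int eq)
  assume "h integrable_on {0..\<theta>1}"
  then have "h integrable_on {0..min \<theta>1 t}"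
    by (rule integrable_on_subinterval) auto
  then show "(\<lambda>s. if s \<in> {0..\<theta>1} then h s else 0) integrable_on {0..t}"
    by (simp only: integrable_restrict_Int eq)
qed

lemma extend:
  fixes \<eta> g :: "real \<Rightarrow> real" and q \<theta>1 \<theta>2 :: real
  assumes th: "0 \<le> \<theta>1" "\<theta>1 \<le> \<theta>2" and W: "W1q_pair q \<theta>1 \<eta> g" and e1: "\<eta> \<theta>1 = 0"
    and pos: "\<forall>s\<in>{0..\<theta>1}. 0 \<le> \<eta> s"
  shows "W1q_pair q \<theta>2 (\<lambda>s. if s \<in> {0..\<theta>1} then \<eta> s else 0) (\<lambda>s. if s \<in> {0..\<theta>1} then g s else 0)"
    and "(\<lambda>s. if s \<in> {0..\<theta>1} then \<eta> s else 0) 0 = \<eta> 0"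
    and "(\<lambda>s. if s \<in> {0..\<theta>1} then \<eta> s else 0) \<theta>2 = 0"
    and "\<forall>s\<in>{0..\<theta>2}. 0 \<le> (\<lambda>s. if s \<in> {0..\<theta>1} then \<eta> s else 0) s"
    and "integral {0..\<theta>2} (\<lambda>s. if s \<in> {0..\<theta>1} then \<eta> s else 0) = integral {0..\<theta>1} \<eta>"
    and "integral {0..\<theta>2} (\<lambda>s. \<bar>(\<lambda>s. if s \<in> {0..\<theta>1} then g s else 0) s\<bar> powr q)
         = integral {0..\<theta>1} (\<lambda>s. \<bar>g s\<bar> powr q)"
proof -
  define \<eta>2 where "\<eta>2 = (\<lambda>s. if s \<in> {0..\<theta>1} then \<eta> s else 0)"
  define g2 where "g2 = (\<lambda>s. if s \<in> {0..\<theta>1} then g s else 0)"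
  have gi: "g absolutely_integrable_on {0..\<theta>1}" and gq: "(\<lambda>s. \<bar>g s\<bar> powr q) integrable_on {0..\<theta>1}"
    and eta: "\<forall>t\<in>{0..\<theta>1}. \<eta> t = \<eta> 0 + integral {0..t} g"
    using W unfolding W1q_pair_def by blast+
  have gint: "g integrable_on {0..\<theta>1}" and agint: "(\<lambda>s. norm (g s)) integrable_on {0..\<theta>1}"
    using gi by (auto simp: absolutely_integrable_on_def)
  have n2: "(\<lambda>s. norm (g2 s)) = (\<lambda>s. if s \<in> {0..\<theta>1} then norm (g s) else 0)"
    unfolding g2_def by auto
  have q2: "(\<lambda>s. \<bar>g2 s\<bar> powr q) = (\<lambda>s. if s \<in> {0..\<theta>1} then \<bar>g s\<bar> powr q else 0)"
    unfolding g2_def by auto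
  have g2i: "g2 absolutely_integrable_on {0..\<theta>2}"
    unfolding absolutely_integrable_on_def n2
    using restrict_integral(2)[OF gint] restrict_integral(2)[OF agint] unfolding g2_def by blast
  have g2q: "(\<lambda>s. \<bar>g2 s\<bar> powr q) integrable_on {0..\<theta>2}"
    unfolding q2 by (rule restrict_integral(2)[OF gq])
  have e0: "\<eta>2 0 = \<eta> 0" unfolding \<eta>2_def using th by simp
  have eta2: "\<forall>t\<in>{0..\<theta>2}. \<eta>2 t = \<eta>2 0 + integral {0..t} g2"
  proof
    fix t assume t: "t \<in> {0..\<theta>2}"
    have I: "integral {0..t} g2 = integral {0..min \<theta>1 t} g" unfolding g2_def by (rule restrict_integral(1))
    show "\<eta>2 t = \<eta>2 0 + integral {0..t} g2"
    proof (cases "t \<le> \<theta>1")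
      case True
      then have tt: "t \<in> {0..\<theta>1}" using t by auto
      then have "\<eta> t = \<eta> 0 + integral {0..t} g" using eta by blast
      then show ?thesis using tt I e0 True unfolding \<eta>2_def by (simp add: min_def)
    next
      case False
      have "\<theta>1 \<in> {0..\<theta>1}" using th by auto
      then have "\<eta> \<theta>1 = \<eta> 0 + integral {0..\<theta>1} g" using eta by blast
      then show ?thesis using I e0 e1 False unfolding \<eta>2_def by (simp add: min_def)
    qed
  qed
  show "W1q_pair q \<theta>2 (\<lambda>s. if s \<in> {0..\<theta>1} then \<eta> s else 0) (\<lambda>s. if s \<in> {0..\<theta>1} then g s else 0)"
    using g2i g2q eta2 unfolding W1q_pair_def \<eta>2_def g2_def by blast
  show "(\<lambda>s. if s \<in> {0..\<theta>1} then \<eta> s else 0) 0 = \<eta> 0" using th by simp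
  show "(\<lambda>s. if s \<in> {0..\<theta>1} then \<eta> s else 0) \<theta>2 = 0" using e1 th by auto
  show "\<forall>s\<in>{0..\<theta>2}. 0 \<le> (\<lambda>s. if s \<in> {0..\<theta>1} then \<eta> s else 0) s" using pos by auto
  show "integral {0..\<theta>2} (\<lambda>s. if s \<in> {0..\<theta>1} then \<eta> s else 0) = integral {0..\<theta>1} \<eta>"
    using restrict_integral(1)[of \<theta>2 \<theta>1 \<eta>] th by (simp add: min_def)
  show "integral {0..\<theta>2} (\<lambda>s. \<bar>(\<lambda>s. if s \<in> {0..\<theta>1} then g s else 0) s\<bar> powr q)
         = integral {0..\<theta>1} (\<lambda>s. \<bar>g s\<bar> powr q)"
    using q2 restrict_integral(1)[of \<theta>2 \<theta>1 "\<lambda>s. \<bar>g s\<bar> powr q"] th unfolding g2_def by (simp add: min_def)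
qed



lemma fs1:
  fixes A B q a v :: real
  assumes "A \<noteq> 0" "B \<noteq> 0" "a \<noteq> 0" "v \<noteq> 0"
  shows "v * (q/A) / (B/A*a/v) = (v * v * q) / (B * a)"
  using assms by (simp add: field_simps)

lemma fs2:
  fixes A B q a v :: real
  assumes "A \<noteq> 0" "B \<noteq> 0" "a \<noteq> 0" "v \<noteq> 0" "q + A = B"
  shows "(B/A*a/v) / (q/A+1) = a/v"
proof -
  have "q/A + 1 = B/A" using assms by (simp add: field_simps)
  then show ?thesis using assms by simp
qed

lemma value_alg:
  fixes q a v :: real
  assumes q: "q > 1" and a: "a > 0" and v: "v > 0"
  shows "(1/q) * ((v * (q/(q-1)) / ((2*q-1)/(q-1)*a/v)) powr q * (((2*q-1)/(q-1)*a/v) / (q/(q-1)+1)))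
     = q powr (q-1) / (2*q-1) powr q * v powr (2*q-1) / a powr (q-1)"
proof -
  have qq: "q - 1 > 0" "2*q - 1 > 0" "q - 1 \<noteq> 0" "2*q - 1 \<noteq> 0" using q by auto
  have h1: "v * (q/(q-1)) / ((2*q-1)/(q-1)*a/v) = (v * v * q) / ((2*q - 1) * a)"
    by (rule fs1) (use qq a v in auto)
  have h2: "((2*q-1)/(q-1)*a/v) / (q/(q-1)+1) = a/v"
    by (rule fs2) (use qq a v in auto)
  have h3: "((v * v * q) / ((2*q - 1) * a)) powr q = v powr q * v powr q * q powr q / ((2*q-1) powr q * a powr q)"
    by (simp add: powr_mult powr_divide)
  have r1: "q powr (q-1) = q powr q / q" using q by (simp add: powr_diff)
  have r2: "v powr (2*q-1) = v powr q * v powr q / v"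
  proof -
    have "v powr (2*q-1) = v powr (q + q - 1)" by (simp add: algebra_simps)
    also have "\<dots> = v powr (q+q) / v powr 1" by (rule powr_diff)
    also have "\<dots> = v powr q * v powr q / v" using powr_one[of v] v by (simp only: powr_add less_imp_le)
    finally show ?thesis .
  qed
  have r3: "a powr (q-1) = a powr q / a" using a by (simp add: powr_diff)
  have pos: "q powr q > 0" "v powr q > 0" "a powr q > 0" "(2*q-1) powr q > 0" using q a v by auto
  show ?thesis unfolding h1 h2 h3 r1 r2 r3 using pos q a v by (simp add: field_simps)
qed

definition Sset :: "real \<Rightarrow> real \<Rightarrow> real \<Rightarrow> real \<Rightarrow> real set" where
  "Sset q x v \<theta> = {(1/q) * integral {0..\<theta>} (\<lambda>s. \<bar>g s\<bar> powr q) | \<eta> g.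
      W1q_pair q \<theta> \<eta> g \<and> \<eta> 0 = v \<and> \<eta> \<theta> = 0 \<and> (\<forall>s\<in>{0..\<theta>}. \<eta> s \<ge> 0) \<and>
      x + integral {0..\<theta>} \<eta> \<le> 0}"

lemma I_cost_Sset: "I_cost q x v \<theta> = Inf (Sset q x v \<theta>)"
  unfolding I_cost_def Sset_def by simp

lemma memb_ext:
  assumes "0 \<le> \<theta>1" "\<theta>1 \<le> \<theta>2" "y \<in> Sset q x v \<theta>1"
  shows "y \<in> Sset q x v \<theta>2"
proof -
  obtain \<eta> g where y: "y = (1/q) * integral {0..\<theta>1} (\<lambda>s. \<bar>g s\<bar> powr q)"
    and W: "W1q_pair q \<theta>1 \<eta> g" and e0: "\<eta> 0 = v" and e1: "\<eta> \<theta>1 = 0"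
    and pos: "\<forall>s\<in>{0..\<theta>1}. \<eta> s \<ge> 0" and ar: "x + integral {0..\<theta>1} \<eta> \<le> 0"
    using assms(3) unfolding Sset_def by blast
  note X = extend[OF assms(1,2) W e1 pos]
  show ?thesis unfolding Sset_def
    apply (rule CollectI)
    apply (rule exI[of _ "\<lambda>s. if s \<in> {0..\<theta>1} then \<eta> s else 0"])
    apply (rule exI[of _ "\<lambda>s. if s \<in> {0..\<theta>1} then g s else 0"])
    using X y e0 ar by simp
qed

lemma Sset_bdd:
  assumes q: "q > 1"
  shows "bdd_below (Sset q x v \<theta>)"
proof (rule bdd_belowI)
  fix y assume "y \<in> Sset q x v \<theta>"
  then obtain g \<eta> where y: "y = (1/q) * integral {0..\<theta>} (\<lambda>s. \<bar>g s\<bar> powr q)" and W: "W1q_pair q \<theta> \<eta> g"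
    unfolding Sset_def by blast
  have "(\<lambda>s. \<bar>g s\<bar> powr q) integrable_on {0..\<theta>}" using W unfolding W1q_pair_def by blast
  then have "0 \<le> integral {0..\<theta>} (\<lambda>s. \<bar>g s\<bar> powr q)" by (rule integral_nonneg) simp
  then show "0 \<le> y" using y q by simp
qed

lemma Sset_lower:
  assumes q: "q > 1" and th: "0 \<le> \<theta>" and x: "x < 0" and v: "v > 0" and y: "y \<in> Sset q x v \<theta>"
  shows "q powr (q - 1) / (2*q - 1) powr q * v powr (2*q - 1) / \<bar>x\<bar> powr (q - 1) \<le> y"
proof -
  obtain \<eta> g where y: "y = (1/q) * integral {0..\<theta>} (\<lambda>s. \<bar>g s\<bar> powr q)"
    and W: "W1q_pair q \<theta> \<eta> g" and e0: "\<eta> 0 = v" and e1: "\<eta> \<theta> = 0"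
    and pos: "\<forall>s\<in>{0..\<theta>}. \<eta> s \<ge> 0" and ar: "x + integral {0..\<theta>} \<eta> \<le> 0"
    using y unfolding Sset_def by blast
  have a: "\<bar>x\<bar> > 0" using x by simp
  have ar2: "integral {0..\<theta>} \<eta> \<le> \<bar>x\<bar>" using ar x by simp
  show ?thesis using lower_bound[OF q th a v W e0 e1 pos ar2] y by simp
qed

lemma Sset_construct:
  assumes q: "q > 1" and v: "v > 0" and tau: "\<tau> > 0" and ar: "x + v * (\<tau> / (q/(q-1) + 1)) \<le> 0"
  shows "(1/q) * ((v * (q/(q-1)) / \<tau>) powr q * (\<tau> / (q/(q-1) + 1))) \<in> Sset q x v \<tau>"
proof -
  note X = construct[OF q v tau]
  show ?thesis unfolding Sset_def
    apply (rule CollectI)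
    apply (rule exI[of _ "\<lambda>s. v * (1 - s/\<tau>) powr (q/(q-1))"])
    apply (rule exI[of _ "\<lambda>s. - v * (q/(q-1)) / \<tau> * (1 - s/\<tau>) powr (q/(q-1) - 1)"])
    using X ar by simp
qed

lemma Sset_nonempty:
  assumes q: "q > 1" and v: "v > 0" and x: "x < 0" and th: "\<theta> > 0"
  shows "Sset q x v \<theta> \<noteq> {}"
proof -
  define \<theta>s where "\<theta>s = (q/(q-1) + 1) * \<bar>x\<bar> / v"
  have ths: "\<theta>s > 0" unfolding \<theta>s_def
    by (intro divide_pos_pos mult_pos_pos) (use q x v in \<open>auto intro: add_pos_pos\<close>)
  define \<tau> where "\<tau> = min \<theta> \<theta>s"
  have tau: "\<tau> > 0" "\<tau> \<le> \<theta>" "\<tau> \<le> \<theta>s" using ths th by (auto simp: \<tau>_def)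
  have "q/(q-1) > 0" using q by simp
  then have p1: "q/(q-1) + 1 > 0" by linarith
  have "v * (\<tau> / (q/(q-1) + 1)) \<le> v * (\<theta>s / (q/(q-1) + 1))"
    using tau v p1 by (simp add: divide_right_mono)
  also have "\<dots> = \<bar>x\<bar>" using v p1 by (simp add: \<theta>s_def)
  finally have "x + v * (\<tau> / (q/(q-1) + 1)) \<le> 0" using x by simp
  from memb_ext[OF _ tau(2) Sset_construct[OF q v tau(1) this]] tau show ?thesis by auto
qed

theorem lemma2p4:
  fixes q T x v :: real
  assumes "q > 1" "T > 0" "x < 0" "v > 0"
    and "(2*q - 1) / (q - 1) * \<bar>x\<bar> / v < T"
  shows "(\<forall>\<theta>1 \<theta>2. 0 < \<theta>1 \<longrightarrow> \<theta>1 \<le> \<theta>2 \<longrightarrow> \<theta>2 \<le> T \<longrightarrow> I_cost q x v \<theta>2 \<le> I_cost q x v \<theta>1)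
    \<and> (\<exists>\<theta>\<in>{0<..<T}. I_cost q x v \<theta> = q powr (q - 1) / (2*q - 1) powr q * v powr (2*q - 1) / \<bar>x\<bar> powr (q - 1))
    \<and> (\<forall>\<theta>\<in>{0<..<T}. q powr (q - 1) / (2*q - 1) powr q * v powr (2*q - 1) / \<bar>x\<bar> powr (q - 1) \<le> I_cost q x v \<theta>)"
proof (intro conjI allI impI ballI)
  note q = assms(1) and x = assms(3) and v = assms(4)
  define C where "C = q powr (q - 1) / (2*q - 1) powr q * v powr (2*q - 1) / \<bar>x\<bar> powr (q - 1)"
  fix \<theta>1 \<theta>2 :: real assume th: "0 < \<theta>1" "\<theta>1 \<le> \<theta>2" "\<theta>2 \<le> T"
  show "I_cost q x v \<theta>2 \<le> I_cost q x v \<theta>1"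
    unfolding I_cost_Sset
  proof (rule cInf_superset_mono[OF Sset_nonempty[OF q v x th(1)] Sset_bdd[OF q]])
    show "Sset q x v \<theta>1 \<subseteq> Sset q x v \<theta>2"
      using memb_ext[of \<theta>1 \<theta>2] th by (meson less_imp_le subsetI)
  qed
next
  note q = assms(1) and x = assms(3) and v = assms(4)
  fix \<theta> assume th: "\<theta> \<in> {0<..<T}"
  show "q powr (q - 1) / (2*q - 1) powr q * v powr (2*q - 1) / \<bar>x\<bar> powr (q - 1) \<le> I_cost q x v \<theta>"
    unfolding I_cost_Sset
  proof (rule cInf_greatest)
    show "Sset q x v \<theta> \<noteq> {}" using Sset_nonempty[OF q v x] th by auto
    fix y assume y: "y \<in> Sset q x v \<theta>"
    show "q powr (q - 1) / (2*q - 1) powr q * v powr (2*q - 1) / \<bar>x\<bar> powr (q - 1) \<le> y"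
      using Sset_lower[OF q _ x v y] th by auto
  qed
next
  note q = assms(1) and x = assms(3) and v = assms(4)
  define \<theta>s where "\<theta>s = (2*q - 1) / (q - 1) * \<bar>x\<bar> / v"
  have ths: "\<theta>s > 0" unfolding \<theta>s_def
    by (intro divide_pos_pos mult_pos_pos) (use q x v in auto)
  have thT: "\<theta>s < T" using assms(5) by (simp add: \<theta>s_def)
  have a: "\<bar>x\<bar> > 0" using x by simp
  have p1: "q/(q-1) + 1 = (2*q - 1) / (q - 1)" using q by (simp add: field_simps)
  have "\<theta>s / (q/(q-1) + 1) = \<bar>x\<bar> / v"
    unfolding \<theta>s_def by (rule fs2) (use q x v in auto)
  then have ar: "x + v * (\<theta>s / (q/(q-1) + 1)) \<le> 0"
    using v x by simp
  have val: "(1/q) * ((v * (q/(q-1)) / \<theta>s) powr q * (\<theta>s / (q/(q-1) + 1)))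
      = q powr (q - 1) / (2*q - 1) powr q * v powr (2*q - 1) / \<bar>x\<bar> powr (q - 1)"
    unfolding \<theta>s_def by (rule value_alg[OF q a v])
  have mem: "q powr (q - 1) / (2*q - 1) powr q * v powr (2*q - 1) / \<bar>x\<bar> powr (q - 1) \<in> Sset q x v \<theta>s"
    using Sset_construct[OF q v ths ar] unfolding val .
  have "I_cost q x v \<theta>s = q powr (q - 1) / (2*q - 1) powr q * v powr (2*q - 1) / \<bar>x\<bar> powr (q - 1)"
    unfolding I_cost_Sset
  proof (rule antisym)
    show "Inf (Sset q x v \<theta>s) \<le> q powr (q - 1) / (2*q - 1) powr q * v powr (2*q - 1) / \<bar>x\<bar> powr (q - 1)"
      by (rule cInf_lower[OF mem Sset_bdd[OF q]])
    show "q powr (q - 1) / (2*q - 1) powr q * v powr (2*q - 1) / \<bar>x\<bar> powr (q - 1) \<le> Inf (Sset q x v \<theta>s)"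
    proof (rule cInf_greatest[OF Sset_nonempty[OF q v x ths]])
      fix y assume y: "y \<in> Sset q x v \<theta>s"
      show "q powr (q - 1) / (2*q - 1) powr q * v powr (2*q - 1) / \<bar>x\<bar> powr (q - 1) \<le> y"
        using Sset_lower[OF q _ x v y] ths by auto
    qed
  qed
  then show "\<exists>\<theta>\<in>{0<..<T}. I_cost q x v \<theta> = q powr (q - 1) / (2*q - 1) powr q * v powr (2*q - 1) / \<bar>x\<bar> powr (q - 1)"
    using ths thT by auto
qed

end
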